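(* Let $d\ge1$ and let $P$ be a probability distribution on $\{0,1\}^d$ with $P(\nu)>0$ for all $\nu\in\{0,1\}^d$. Fix $\omega\in\{0,1\}^d$. The map $q\mapsto x=(x_1,\ldots,x_d)$ with $x_i:=\left(\frac{q_i}{1-q_i}\right)^{1-2\omega_i}$ is a bijection from $(0,1)^d$ onto $(0,\infty)^d$, and in terms of $x$, \[ f_\omega(q)=\prod_{i=1}^d(1+x_i). \] Moreover, for $q\in(0,1)^d$: $q\in\mathcal{Q}_\omega$ if and only if for every $\nu\in\{0,1\}^d$, \[ \prod_{i:\,\nu_i\ne\omega_i}x_i\le\frac{P(\nu)}{P(\omega)}, \] where the empty product (when $\nu=\omega$) equals $1$.
   Context: For $\omega\in\{0,1\}^d$ and $q\in[0,1]^d$, $f_\omega(q):=\prod_{i=1}^d q_i^{-\omega_i}(1-q_i)^{\omega_i-1}\in\mathbb{R}\cup\{+\infty\}$ (with $0^0=1$, $1/0=+\infty$), and $\mathcal{Q}_\omega:=\{q\in[0,1]^d\mid \forall\nu\in\{0,1\}^d:\ P(\omega)f_\omega(q)\le P(\nu)f_\nu(q)\}$. *)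

theory Defs
  imports "HOL-Analysis.Analysis"
begin

text \<open>Points of {0,1}^d are functions 'd => bool (True = 1), with 'd a finite index type of
  cardinality d. Points of [0,1]^d are functions 'd => real.\<close>

text \<open>f_omega(q) = prod_i q_i^(-omega_i) (1-q_i)^(omega_i - 1), valued in extended reals,
  with 0^0 = 1 and 1/0 = +infinity.\<close>
definition f_omega :: "('d::finite \<Rightarrow> bool) \<Rightarrow> ('d \<Rightarrow> real) \<Rightarrow> ereal" where
  "f_omega \<omega> q = (\<Prod>i\<in>UNIV. inverse (ereal (q i)) ^ (of_bool (\<omega> i))
                                 * inverse (ereal (1 - q i)) ^ (1 - of_bool (\<omega> i)))"

definition Q_omega :: "(('d::finite \<Rightarrow> bool) \<Rightarrow> real) \<Rightarrow> ('d \<Rightarrow> bool) \<Rightarrow> ('d \<Rightarrow> real) set" where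
  "Q_omega P \<omega> = {q. (\<forall>i. 0 \<le> q i \<and> q i \<le> 1) \<and>
      (\<forall>\<nu>. ereal (P \<omega>) * f_omega \<omega> q \<le> ereal (P \<nu>) * f_omega \<nu> q)}"

definition xmap :: "('d::finite \<Rightarrow> bool) \<Rightarrow> ('d \<Rightarrow> real) \<Rightarrow> ('d \<Rightarrow> real)" where
  "xmap \<omega> q = (\<lambda>i. (q i / (1 - q i)) powr (1 - 2 * of_bool (\<omega> i)))"

end

theory Submission
  imports Defs
begin

definition gg :: "bool \<Rightarrow> real \<Rightarrow> real" where
  "gg b t = (if b then 1 / t else 1 / (1 - t))"

lemma xmap_eq:
  fixes t :: real
  assumes "0 < t" "t < 1"
  shows "(t / (1 - t)) powr (1 - 2 * of_bool b) = (if b then (1 - t) / t else t / (1 - t))"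
proof (cases b)
  case True
  have "(t / (1 - t)) powr (1 - 2 * of_bool b) = (t / (1 - t)) powr (- 1)" using True by simp
  also have "\<dots> = 1 / (t / (1 - t))" by (rule powr_neg_one) (use assms in simp)
  finally show ?thesis using True by simp
next
  case False
  then show ?thesis using assms by simp
qed

lemma f_omega_eq:
  assumes "\<forall>i. 0 < q i \<and> q i < 1"
  shows "f_omega \<omega> q = ereal (\<Prod>i\<in>UNIV. gg (\<omega> i) (q i))"
proof -
  have "\<And>i. inverse (ereal (q i)) ^ (of_bool (\<omega> i))
             * inverse (ereal (1 - q i)) ^ (1 - of_bool (\<omega> i)) = ereal (gg (\<omega> i) (q i))"
  proof -
    fix i
    have "q i \<noteq> 0" "1 - q i \<noteq> 0" using assms[rule_format, of i] by auto
    then show "inverse (ereal (q i)) ^ (of_bool (\<omega> i))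
             * inverse (ereal (1 - q i)) ^ (1 - of_bool (\<omega> i)) = ereal (gg (\<omega> i) (q i))"
      by (cases "\<omega> i") (auto simp: gg_def divide_inverse)
  qed
  then show ?thesis unfolding f_omega_def by (simp add: prod_ereal)
qed

lemma gg_pos: "0 < t \<Longrightarrow> t < 1 \<Longrightarrow> 0 < gg b t"
  by (auto simp: gg_def)

lemma gg_rel:
  assumes "0 < t" "t < 1"
  shows "gg b t * (if b \<noteq> c then (t / (1 - t)) powr (1 - 2 * of_bool c) else 1) = gg c t"
  using assms by (cases b; cases c) (auto simp: gg_def xmap_eq field_simps)

theorem lemma3:
  fixes P :: "('d::finite \<Rightarrow> bool) \<Rightarrow> real" and \<omega> :: "'d \<Rightarrow> bool"
  assumes Ppos: "\<forall>\<nu>. P \<nu> > 0"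
    and Psum: "(\<Sum>\<nu>\<in>UNIV. P \<nu>) = 1"
  shows "bij_betw (xmap \<omega>) {q. \<forall>i. 0 < q i \<and> q i < 1} {x. \<forall>i. 0 < x i} \<and>
         (\<forall>q. (\<forall>i. 0 < q i \<and> q i < 1) \<longrightarrow>
            f_omega \<omega> q = ereal (\<Prod>i\<in>UNIV. 1 + xmap \<omega> q i)) \<and>
         (\<forall>q. (\<forall>i. 0 < q i \<and> q i < 1) \<longrightarrow>
            (q \<in> Q_omega P \<omega> \<longleftrightarrow>
              (\<forall>\<nu>. (\<Prod>i\<in>{i. \<nu> i \<noteq> \<omega> i}. xmap \<omega> q i) \<le> P \<nu> / P \<omega>)))"
proof -
  have xm: "xmap \<omega> q i = (if \<omega> i then (1 - q i) / q i else q i / (1 - q i))"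
    if "0 < q i" "q i < 1" for q i
    using xmap_eq[OF that] unfolding xmap_def by simp
  show ?thesis
proof (intro conjI allI impI)
  define h where "h = (\<lambda>x::'d \<Rightarrow> real. \<lambda>i. if \<omega> i then 1 / (1 + x i) else x i / (1 + x i))"
  show "bij_betw (xmap \<omega>) {q. \<forall>i. 0 < q i \<and> q i < 1} {x. \<forall>i. 0 < x i}"
  proof (rule bij_betw_byWitness[where f' = h])
    show "\<forall>a\<in>{q. \<forall>i. 0 < q i \<and> q i < 1}. h (xmap \<omega> a) = a"
    proof (intro ballI ext)
      fix a :: "'d \<Rightarrow> real" and i assume "a \<in> {q. \<forall>i. 0 < q i \<and> q i < 1}"
      then have a: "0 < a i" "a i < 1" by auto
      show "h (xmap \<omega> a) i = a i" using a unfolding h_def xm[of a i, OF a]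
        by (auto simp: field_simps)
    qed
    show "\<forall>a'\<in>{x. \<forall>i. 0 < x i}. xmap \<omega> (h a') = a'"
    proof (intro ballI ext)
      fix a :: "'d \<Rightarrow> real" and i assume "a \<in> {x. \<forall>i. 0 < x i}"
      then have a: "0 < a i" by auto
      have b: "0 < h a i" "h a i < 1" using a unfolding h_def by auto
      show "xmap \<omega> (h a) i = a i" unfolding xm[of "h a" i, OF b] using a unfolding h_def
        by (auto simp: field_simps)
    qed
    show "xmap \<omega> ` {q. \<forall>i. 0 < q i \<and> q i < 1} \<subseteq> {x. \<forall>i. 0 < x i}"
      by (auto simp: xm)
    show "h ` {x. \<forall>i. 0 < x i} \<subseteq> {q. \<forall>i. 0 < q i \<and> q i < 1}"
    proof (clarify, intro conjI)
      fix x :: "'d \<Rightarrow> real" and i assume "\<forall>i. 0 < x i"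
      then have p: "0 < x i" by auto
      show "0 < h x i" "h x i < 1" using p by (auto simp: h_def field_simps)
    qed
  qed
next
  fix q :: "'d \<Rightarrow> real" assume q: "\<forall>i. 0 < q i \<and> q i < 1"
  have "\<And>i. gg (\<omega> i) (q i) = 1 + xmap \<omega> q i"
  proof -
    fix i have a: "0 < q i" "q i < 1" using q by auto
    show "gg (\<omega> i) (q i) = 1 + xmap \<omega> q i" unfolding xm[of q i, OF a] gg_def using a
      by (auto simp: field_simps)
  qed
  then show "f_omega \<omega> q = ereal (\<Prod>i\<in>UNIV. 1 + xmap \<omega> q i)"
    using f_omega_eq[OF q] by simp
next
  fix q :: "'d \<Rightarrow> real" assume q: "\<forall>i. 0 < q i \<and> q i < 1"
  define F where "F = (\<lambda>\<nu>. \<Prod>i\<in>UNIV. gg (\<nu> i) (q i))"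
  define X where "X = (\<lambda>\<nu>::'d\<Rightarrow>bool. \<Prod>i\<in>{i. \<nu> i \<noteq> \<omega> i}. xmap \<omega> q i)"
  have Fpos: "0 < F \<nu>" for \<nu> unfolding F_def using q by (auto intro!: prod_pos gg_pos)
  have Xpos: "0 < X \<nu>" for \<nu> unfolding X_def using q by (auto intro!: prod_pos simp: xm)
  have rel: "F \<nu> * X \<nu> = F \<omega>" for \<nu>
  proof -
    have "X \<nu> = (\<Prod>i\<in>UNIV. if \<nu> i \<noteq> \<omega> i then xmap \<omega> q i else 1)"
      unfolding X_def by (simp add: prod.If_cases Int_def)
    then have "F \<nu> * X \<nu> = (\<Prod>i\<in>UNIV. gg (\<nu> i) (q i) * (if \<nu> i \<noteq> \<omega> i then xmap \<omega> q i else 1))"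
      unfolding F_def by (simp add: prod.distrib)
    also have "\<dots> = F \<omega>" unfolding F_def
    proof (rule prod.cong)
      fix i assume "i \<in> (UNIV::'d set)"
      have a: "0 < q i" "q i < 1" using q by auto
      show "gg (\<nu> i) (q i) * (if \<nu> i \<noteq> \<omega> i then xmap \<omega> q i else 1) = gg (\<omega> i) (q i)"
        using gg_rel[OF a, of "\<nu> i" "\<omega> i"] unfolding xmap_def by simp
    qed simp
    finally show ?thesis .
  qed
  have fe: "f_omega \<nu> q = ereal (F \<nu>)" for \<nu> unfolding F_def using f_omega_eq[OF q] .
  have "q \<in> Q_omega P \<omega> \<longleftrightarrow> (\<forall>\<nu>. P \<omega> * F \<omega> \<le> P \<nu> * F \<nu>)"
    unfolding Q_omega_def using q by (auto simp: fe less_imp_le)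
  also have "\<dots> \<longleftrightarrow> (\<forall>\<nu>. X \<nu> \<le> P \<nu> / P \<omega>)"
  proof (intro arg_cong[where f=All] ext)
    fix \<nu>
    have pw: "0 < P \<omega>" using Ppos by auto
    have "P \<omega> * F \<omega> \<le> P \<nu> * F \<nu> \<longleftrightarrow> (P \<omega> * X \<nu>) * F \<nu> \<le> P \<nu> * F \<nu>"
      by (simp flip: rel[of \<nu>] add: mult_ac)
    also have "\<dots> \<longleftrightarrow> P \<omega> * X \<nu> \<le> P \<nu>" using Fpos[of \<nu>] by simp
    also have "\<dots> \<longleftrightarrow> X \<nu> \<le> P \<nu> / P \<omega>" using pw by (simp add: field_simps)
    finally show "P \<omega> * F \<omega> \<le> P \<nu> * F \<nu> \<longleftrightarrow> X \<nu> \<le> P \<nu> / P \<omega>" .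
  qed
  finally show "q \<in> Q_omega P \<omega> \<longleftrightarrow> (\<forall>\<nu>. (\<Prod>i\<in>{i. \<nu> i \<noteq> \<omega> i}. xmap \<omega> q i) \<le> P \<nu> / P \<omega>)"
    unfolding X_def .
qed
qed

end
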